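(* Fix $\phi\in\mathbb{R}^d$ with $\mu=\|\phi\|^2>0$, a ground-truth class $y\in[V]$ with one-hot label ${\bm y}={\bm e}_y$, softmax cross-entropy $f({\bm z},{\bm y})=-\sum_k y_k\log p_k({\bm z})$ (with $L$ a uniform bound on the norms of its first three ${\bm z}$-derivatives), $\kappa\ge0$, and ${\bm W}^t\in\mathbb{R}^{V\times d}$. Let ${\bm z}^t={\bm W}^t\phi$, ${\bm p}^t=\mathrm{softmax}({\bm z}^t)$, ${\bm g}^t={\bm p}^t-{\bm y}$, ${\bm H}^t_{{\bm z}}=\mathrm{diag}({\bm p}^t)-{\bm p}^t({\bm p}^t)^\top$, and $y^*=\arg\max_{j\neq y}p_j^t$. For step size $\eta$ with $|\eta|\in(0,1]$ take $|\rho|=\kappa\sqrt{|\eta|}$, set $\eta'=\eta\mu$ and $\tilde\rho^{\,t}=\rho\sqrt\mu/\|{\bm g}^t\|$ ($0$ if ${\bm g}^t=0$), and assume the sign condition $\eta'\tilde\rho^{\,t}>0$. With $F({\bm W})=f({\bm W}\phi,{\bm y})$, define ${\bm W}^{t+1}(\mathrm{GD})={\bm W}^t-\eta\nabla F({\bm W}^t)$ and ${\bm W}^{t+1}(\mathrm{SAM})={\bm W}^t-\eta\nabla F({\bm W}^t+\rho\nabla F({\bm W}^t)/\|\nabla F({\bm W}^t)\|)$, and $\alpha_i^{(a)}=p_i^{t+1}(a)/p_i^t$ where ${\bm p}^{t+1}(a)=\mathrm{softmax}({\bm W}^{t+1}(a)\phi)$. Then there exists $\eta_0>0$, depending only on $({\bm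 p}^t,{\bm H}^t_{{\bm z}},\|{\bm g}^t\|,\mu,\kappa,L)$, such that for all $0<|\eta|\le\eta_0$, $$\alpha^{\mathrm{SAM}}_{y^*}\le\alpha^{\mathrm{GD}}_{y^*}.$$ Moreover, the inequality is strict whenever $p^t_{y^*}\in(0,1)$ and $\tilde\rho^{\,t}\neq0$, and equality holds when $\tilde\rho^{\,t}=0$.
   Context: $\|\cdot\|$ is Euclidean/Frobenius norm; $\nabla F({\bm W})=({\bm p}({\bm W}\phi)-{\bm y})\phi^\top$. $\alpha_i$ is the one-step confidence ratio of class $i$. *)

theory Defs
  imports "HOL-Analysis.Analysis"
begin

definition softmax :: "real ^ 'v::finite \<Rightarrow> real ^ 'v" where
  "softmax z = (\<chi> i. exp (z $ i) / (\<Sum>j\<in>UNIV. exp (z $ j)))"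

definition onehot :: "'v::finite \<Rightarrow> real ^ 'v" where
  "onehot y = (\<chi> i. if i = y then 1 else 0)"

text \<open>Gradient of F(W) = f(W phi, e_y) (softmax cross-entropy):
  nabla F(W) = (softmax(W phi) - e_y) phi^T.\<close>
definition gradF :: "real ^ 'd::finite \<Rightarrow> 'v::finite \<Rightarrow> real ^ 'd ^ 'v \<Rightarrow> real ^ 'd ^ 'v" where
  "gradF \<phi> y W = (\<chi> i j. (softmax (W *v \<phi>) - onehot y) $ i * \<phi> $ j)"

definition W_GD :: "real ^ 'd::finite \<Rightarrow> 'v::finite \<Rightarrow> real \<Rightarrow> real ^ 'd ^ 'v \<Rightarrow> real ^ 'd ^ 'v" where
  "W_GD \<phi> y \<eta> W = W - \<eta> *\<^sub>R gradF \<phi> y W"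

text \<open>SAM update; norm is the Frobenius norm; division by zero gives 0
  (no perturbation when the gradient vanishes).\<close>
definition W_SAM :: "real ^ 'd::finite \<Rightarrow> 'v::finite \<Rightarrow> real \<Rightarrow> real \<Rightarrow> real ^ 'd ^ 'v \<Rightarrow> real ^ 'd ^ 'v" where
  "W_SAM \<phi> y \<eta> \<rho> W =
     W - \<eta> *\<^sub>R gradF \<phi> y (W + (\<rho> / norm (gradF \<phi> y W)) *\<^sub>R gradF \<phi> y W)"

definition conf_ratio :: "real ^ 'd::finite \<Rightarrow> real ^ 'd ^ 'v::finite \<Rightarrow> real ^ 'd ^ 'v \<Rightarrow> 'v \<Rightarrow> real" where
  "conf_ratio \<phi> W W' i = softmax (W' *v \<phi>) $ i / softmax (W *v \<phi>) $ i"

definition rho_tilde :: "real ^ 'd::finite \<Rightarrow> 'v::finite \<Rightarrow> real \<Rightarrow> real ^ 'd ^ 'v \<Rightarrow> real" where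
  "rho_tilde \<phi> y \<rho> W =
     \<rho> * sqrt ((norm \<phi>)\<^sup>2) / norm (softmax (W *v \<phi>) - onehot y)"

end

theory Submission
  imports Defs
begin


lemma softmax_pos: "softmax z $ i > 0"
  unfolding softmax_def by (simp add: sum_pos)

lemma softmax_sum: "(\<Sum>i\<in>UNIV. softmax z $ i) = 1"
proof -
  have "(\<Sum>j\<in>UNIV. exp (z $ j)) > 0" by (simp add: sum_pos)
  then show ?thesis unfolding softmax_def by (simp add: sum_divide_distrib[symmetric])
qed

lemma softmax_shift:
  "softmax (z + w) $ i = softmax z $ i * exp (w $ i) / (\<Sum>j\<in>UNIV. softmax z $ j * exp (w $ j))"
proof -
  define Z where "Z = (\<Sum>j\<in>UNIV. exp (z $ j))"
  have Z: "Z > 0" unfolding Z_def by (simp add: sum_pos)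
  have "(\<Sum>j\<in>UNIV. softmax z $ j * exp (w $ j)) = (\<Sum>j\<in>UNIV. exp (z $ j + w $ j)) / Z"
    unfolding softmax_def Z_def[symmetric] by (simp add: sum_divide_distrib exp_add)
  then show ?thesis using Z unfolding softmax_def Z_def[symmetric] by (simp add: exp_add)
qed

lemma norm_sq_vec: "(norm (x :: real ^ 'n))\<^sup>2 = (\<Sum>i\<in>UNIV. (x $ i)\<^sup>2)"
  unfolding power2_norm_eq_inner inner_vec_def by (simp add: power2_eq_square)

lemma gradF_mulv: "gradF \<phi> y W *v \<phi> = (norm \<phi>)\<^sup>2 *\<^sub>R (softmax (W *v \<phi>) - onehot y)"
proof -
  have "(\<Sum>j\<in>UNIV. c * \<phi> $ j * \<phi> $ j) = (norm \<phi>)\<^sup>2 * c" for c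
  proof -
    have e: "(norm \<phi>)\<^sup>2 = (\<Sum>j\<in>UNIV. \<phi> $ j * \<phi> $ j)" using norm_sq_vec[of \<phi>] by (simp add: power2_eq_square)
    have "(\<Sum>j\<in>UNIV. c * \<phi> $ j * \<phi> $ j) = c * (\<Sum>j\<in>UNIV. \<phi> $ j * \<phi> $ j)"
      by (simp add: sum_distrib_left mult.assoc)
    then show ?thesis unfolding e by simp
  qed
  then show ?thesis by (simp add: vec_eq_iff gradF_def matrix_vector_mult_def mult.assoc)
qed

lemma norm_gradF: "norm (gradF \<phi> y W) = norm (softmax (W *v \<phi>) - onehot y) * norm \<phi>"
proof -
  let ?g = "softmax (W *v \<phi>) - onehot y"
  have "(norm (gradF \<phi> y W))\<^sup>2 = (\<Sum>i\<in>UNIV. (norm (gradF \<phi> y W $ i))\<^sup>2)"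
    by (simp add: power2_norm_eq_inner inner_vec_def)
  also have "\<dots> = (\<Sum>i\<in>UNIV. (?g $ i)\<^sup>2 * (norm \<phi>)\<^sup>2)"
  proof (rule sum.cong)
    fix i
    have "gradF \<phi> y W $ i = (?g $ i) *\<^sub>R \<phi>" by (simp add: gradF_def vec_eq_iff)
    then show "(norm (gradF \<phi> y W $ i))\<^sup>2 = (?g $ i)\<^sup>2 * (norm \<phi>)\<^sup>2"
      by (simp add: power_mult_distrib)
  qed simp
  also have "\<dots> = (norm ?g * norm \<phi>)\<^sup>2"
    by (simp add: norm_sq_vec[of ?g] sum_distrib_right power_mult_distrib)
  finally show ?thesis by (simp add: power2_eq_iff_nonneg)
qed




lemma exp_quad: fixes x :: real assumes "x \<le> 1" shows "exp x \<le> 1 + x + x\<^sup>2"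
proof (cases "x \<ge> 0")
  case True then show ?thesis using exp_bound assms by blast
next
  case False
  have e: "exp (-x) \<ge> 1 - x" using exp_ge_add_one_self[of "-x"] by simp
  have "exp x = 1 / exp (-x)" by (simp add: exp_minus field_simps)
  also have "\<dots> \<le> 1 / (1 - x)" using e False by (intro divide_left_mono) auto
  also have "\<dots> \<le> 1 + x + x\<^sup>2"
  proof -
    have "(1 - x) * (1 + x + x\<^sup>2) = 1 - x^3" by (simp add: algebra_simps power2_eq_square power3_eq_cube)
    moreover have "x^3 \<le> 0" using False mult_nonneg_nonpos[of "x*x" x] by (simp add: power3_eq_cube)
    ultimately have "1 \<le> (1 - x) * (1 + x + x\<^sup>2)" by simp
    then show ?thesis using False by (simp add: divide_le_eq mult.commute)
  qed
  finally show ?thesis .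
qed

lemma c0_alg:
  fixes P q A2 A3 R :: real
  assumes "q > 0" "R = 1 - q" "R \<ge> 0" "A2 \<ge> P\<^sup>2" "P > 0" "A2 \<le> P * R" "A3 \<le> P * A2"
  shows "P * (P - (q\<^sup>2 + A2) + q) - ((q^3 + A3) - q\<^sup>2) + (q\<^sup>2 + A2) * ((q\<^sup>2 + A2) - q) > 0"
proof -
  have id: "P * (P - (q\<^sup>2 + A2) + q) - ((q^3 + A3) - q\<^sup>2) + (q\<^sup>2 + A2) * ((q\<^sup>2 + A2) - q)
     = (A2 - P)\<^sup>2 + q\<^sup>2 * A2 + q * R * (P - A2) + q\<^sup>2 * R\<^sup>2 + (P * A2 - A3)"
    unfolding assms(2) by (simp add: algebra_simps power2_eq_square power3_eq_cube)
  have A2: "A2 > 0" using assms(4,5) by (smt (verit) zero_less_power)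
  have "P * R \<le> P" using assms by (simp add: mult_left_le)
  then have "P - A2 \<ge> 0" using assms(6) by linarith
  then have t3: "q * R * (P - A2) \<ge> 0" using assms by simp
  have t2: "q\<^sup>2 * A2 > 0" using A2 assms by simp
  have t5: "P * A2 - A3 \<ge> 0" using assms by simp
  have "(A2 - P)\<^sup>2 \<ge> 0" "q\<^sup>2 * R\<^sup>2 \<ge> 0" by simp_all
  then show ?thesis unfolding id using t2 t3 t5 by linarith
qed



definition tilt :: "real^'v::finite \<Rightarrow> real^'v \<Rightarrow> real \<Rightarrow> real^'v" where
  "tilt p g r = (\<chi> i. p$i * exp (r * g$i) / (\<Sum>j\<in>UNIV. p$j * exp (r * g$j)))"

lemma tilt_comp_deriv:
  fixes p g :: "real^'v::finite"
  assumes "(\<Sum>j\<in>UNIV. p$j) = 1"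
  shows "((\<lambda>r. tilt p g r $ i) has_real_derivative (p$i * (g$i - (\<Sum>j\<in>UNIV. p$j * g$j)))) (at 0)"
proof -
  have "((\<lambda>r. p$i * exp (r * g$i) / (\<Sum>j\<in>UNIV. p$j * exp (r * g$j))) has_real_derivative
     ((p$i * (exp (0 * g$i) * g$i)) * (\<Sum>j\<in>UNIV. p$j * exp (0 * g$j)) - p$i * exp (0 * g$i) * (\<Sum>j\<in>UNIV. p$j * (exp (0 * g$j) * g$j)))
       / ((\<Sum>j\<in>UNIV. p$j * exp (0 * g$j)) * (\<Sum>j\<in>UNIV. p$j * exp (0 * g$j)))) (at 0)"
    using assms
    by (intro DERIV_divide DERIV_cmult DERIV_sum DERIV_chain2[OF DERIV_exp] DERIV_cmult_Id[THEN DERIV_cong]) (auto intro!: derivative_eq_intros)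
  then show ?thesis using assms by (simp add: tilt_def algebra_simps)
qed

lemma psi_deriv:
  fixes p g :: "real^'v::finite"
  assumes "(\<Sum>j\<in>UNIV. p$j) = 1"
  shows "((\<lambda>r. tilt p g r $ a - (\<Sum>j\<in>UNIV. p$j * tilt p g r $ j)) has_real_derivative
     (p$a * (g$a - (\<Sum>j\<in>UNIV. p$j * g$j)) - (\<Sum>j\<in>UNIV. p$j * (p$j * (g$j - (\<Sum>j\<in>UNIV. p$j * g$j)))))) (at 0)"
  by (intro DERIV_diff DERIV_sum DERIV_cmult tilt_comp_deriv assms)


lemma core:
  fixes p :: "real^'v::finite" and y ys0 :: 'v and \<kappa> \<mu> :: real
  assumes pos: "\<And>i. p$i > 0" and sum1: "(\<Sum>i\<in>UNIV. p$i) = 1" and ys0: "ys0 \<noteq> y"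
    and mx: "\<And>j. j \<noteq> y \<Longrightarrow> p$j \<le> p$ys0" and \<kappa>: "\<kappa> > 0" and \<mu>: "\<mu> > 0"
  shows "\<exists>\<eta>0>0. \<forall>\<eta> r ys. 0 < \<bar>\<eta>\<bar> \<and> \<bar>\<eta>\<bar> \<le> \<eta>0 \<and>
      \<bar>r\<bar> = \<kappa> * sqrt \<bar>\<eta>\<bar> * sqrt \<mu> / norm (p - onehot y) \<and> \<eta>*\<mu>*r > 0 \<and> ys \<noteq> y \<and> p$ys = p$ys0 \<longrightarrow>
     exp (-(\<eta>*\<mu>) * (tilt p (p - onehot y) r $ ys - onehot y $ ys))
        / (\<Sum>j\<in>UNIV. p$j * exp (-(\<eta>*\<mu>) * (tilt p (p - onehot y) r $ j - onehot y $ j)))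
     < exp (-(\<eta>*\<mu>) * (p$ys - onehot y $ ys)) / (\<Sum>j\<in>UNIV. p$j * exp (-(\<eta>*\<mu>) * (p$j - onehot y $ j)))"
proof -
  define g where "g = p - onehot y"
  define q where "q = p$y"
  define P where "P = p$ys0"
  define G where "G = (\<Sum>j\<in>UNIV. p$j * g$j)"
  define c0 where "c0 = P * (g$ys0 - G) - (\<Sum>j\<in>UNIV. p$j * (p$j * (g$j - G)))"
  define \<psi> where "\<psi> = (\<lambda>r. tilt p g r $ ys0 - (\<Sum>j\<in>UNIV. p$j * tilt p g r $ j))"
  have gj: "\<And>j. g$j = p$j - (if j = y then 1 else 0)" by (simp add: g_def onehot_def)
  have p1: "\<And>j. p$j \<le> 1"
  proof -
    fix j
    have "p$j \<le> (\<Sum>i\<in>UNIV. p$i)" by (rule member_le_sum) (auto intro: less_imp_le pos)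
    then show "p$j \<le> 1" using sum1 by simp
  qed
  have P0: "P > 0" unfolding P_def by (rule pos)
  have q0: "q > 0" unfolding q_def by (rule pos)
  have gys0: "g$ys0 = P" using ys0 by (simp add: gj P_def)
  define A2 where "A2 = (\<Sum>j\<in>UNIV-{y}. (p$j)\<^sup>2)"
  define A3 where "A3 = (\<Sum>j\<in>UNIV-{y}. (p$j)^3)"
  define R where "R = (\<Sum>j\<in>UNIV-{y}. p$j)"
  have S1: "(\<Sum>j\<in>UNIV. p$j) = q + R" unfolding q_def R_def by (rule sum.remove) auto
  have S2: "(\<Sum>j\<in>UNIV. (p$j)\<^sup>2) = q\<^sup>2 + A2" unfolding q_def A2_def by (rule sum.remove) auto
  have S3: "(\<Sum>j\<in>UNIV. (p$j)^3) = q^3 + A3" unfolding q_def A3_def by (rule sum.remove) auto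
  have R: "R = 1 - q" using S1 sum1 by simp
  have R0: "R \<ge> 0" unfolding R_def by (rule sum_nonneg) (auto intro: less_imp_le pos)
  have A2lo: "A2 \<ge> P\<^sup>2" unfolding A2_def P_def by (rule member_le_sum) (use ys0 in auto)
  have A2hi: "A2 \<le> P * R" unfolding A2_def R_def sum_distrib_left
  proof (rule sum_mono)
    fix j assume "j \<in> UNIV - {y}"
    then have "p$j \<le> P" using mx unfolding P_def by auto
    then show "(p$j)\<^sup>2 \<le> P * p$j" using pos[of j] by (simp add: power2_eq_square mult_right_mono)
  qed
  have A3hi: "A3 \<le> P * A2" unfolding A2_def A3_def sum_distrib_left
  proof (rule sum_mono)
    fix j assume "j \<in> UNIV - {y}"
    then have "p$j \<le> P" using mx unfolding P_def by auto
    then show "(p$j)^3 \<le> P * (p$j)\<^sup>2" using pos[of j]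
      by (simp add: power2_eq_square power3_eq_cube mult_right_mono)
  qed
  have Gv: "G = q\<^sup>2 + A2 - q"
  proof -
    have "G = (\<Sum>j\<in>UNIV. (p$j)\<^sup>2 - (if j = y then p$j else 0))"
      unfolding G_def by (intro sum.cong) (auto simp: gj power2_eq_square algebra_simps)
    also have "\<dots> = q\<^sup>2 + A2 - q" by (simp add: sum_subtractf S2 q_def)
    finally show ?thesis .
  qed
  have T: "(\<Sum>j\<in>UNIV. p$j * (p$j * (g$j - G))) = (q^3 + A3 - q\<^sup>2) - G * (q\<^sup>2 + A2)"
  proof -
    have "(\<Sum>j\<in>UNIV. p$j * (p$j * (g$j - G))) = (\<Sum>j\<in>UNIV. ((p$j)^3 - (if j = y then (p$j)\<^sup>2 else 0)) - G * (p$j)\<^sup>2)"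
      by (intro sum.cong) (auto simp: gj power2_eq_square power3_eq_cube algebra_simps)
    also have "\<dots> = (q^3 + A3 - q\<^sup>2) - G * (q\<^sup>2 + A2)"
      by (simp add: sum_subtractf S2 S3 q_def sum_distrib_left[symmetric])
    finally show ?thesis .
  qed
  have c0pos: "c0 > 0"
  proof -
    have "c0 = P * (P - (q\<^sup>2 + A2) + q) - ((q^3 + A3) - q\<^sup>2) + (q\<^sup>2 + A2) * ((q\<^sup>2 + A2) - q)"
      unfolding c0_def T unfolding gys0 Gv by (simp add: algebra_simps)
    also have "\<dots> > 0" by (rule c0_alg[OF q0 R R0 A2lo P0 A2hi A3hi])
    finally show ?thesis .
  qed
  have D: "(\<psi> has_real_derivative c0) (at 0)"
    unfolding \<psi>_def c0_def G_def P_def by (rule psi_deriv[OF sum1])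
  have "eventually (\<lambda>h. c0/2 < (\<psi> (0 + h) - \<psi> 0) / h) (at 0)"
    using order_tendstoD(1)[OF DERIV_D[OF D], of "c0/2"] c0pos by simp
  then obtain d where d0: "d > 0" and dq: "\<And>h. h \<noteq> 0 \<Longrightarrow> \<bar>h\<bar> < d \<Longrightarrow> c0/2 < (\<psi> h - \<psi> 0) / h"
    unfolding eventually_at by (auto simp: dist_real_def)
  have ng: "norm g > 0"
  proof -
    have "g \<noteq> 0" using gys0 P0 by auto
    then show ?thesis by simp
  qed
  define k where "k = \<kappa> * sqrt \<mu> / norm g"
  have k0: "k > 0" unfolding k_def using \<kappa> \<mu> ng by simp
  define \<eta>0 where "\<eta>0 = min (1/(2*\<mu>)) (min (d\<^sup>2/(2*k\<^sup>2)) (c0\<^sup>2*k\<^sup>2/(64*\<mu>\<^sup>2)))"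
  have \<eta>00: "\<eta>0 > 0" unfolding \<eta>0_def using \<mu> d0 k0 c0pos by simp
  have tilt0: "tilt p g 0 = p" using sum1 by (simp add: tilt_def vec_eq_iff)
  show ?thesis
  proof (intro exI[of _ \<eta>0] conjI \<eta>00 allI impI, elim conjE)
    fix \<eta> r ys
    assume e0: "0 < \<bar>\<eta>\<bar>" and e1: "\<bar>\<eta>\<bar> \<le> \<eta>0"
      and rr: "\<bar>r\<bar> = \<kappa> * sqrt \<bar>\<eta>\<bar> * sqrt \<mu> / norm (p - onehot y)"
      and sr: "\<eta>*\<mu>*r > 0" and ys: "ys \<noteq> y" and pys: "p$ys = p$ys0"
    define s where "s = \<eta> * \<mu>"
    define t where "t = sqrt \<bar>\<eta>\<bar>"
    have t0: "t > 0" unfolding t_def using e0 by simp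
    have tt: "t\<^sup>2 = \<bar>\<eta>\<bar>" unfolding t_def by simp
    have rk: "\<bar>r\<bar> = k * t" unfolding rr k_def t_def g_def by simp
    have sabs: "\<bar>s\<bar> = \<mu> * t\<^sup>2" unfolding s_def tt using \<mu> by (simp add: abs_mult)
    have sr': "s * r > 0" using sr by (simp add: s_def)
    have r0: "r \<noteq> 0" using sr' by auto
    have srabs: "s * r = \<bar>s\<bar> * \<bar>r\<bar>" using sr' by (simp add: abs_mult[symmetric])
    have "r\<^sup>2 = (k * t)\<^sup>2" using rk by (metis power2_abs)
    also have "\<dots> = k\<^sup>2 * \<bar>\<eta>\<bar>" using tt by (simp add: power_mult_distrib)
    also have "\<dots> \<le> k\<^sup>2 * (d\<^sup>2/(2*k\<^sup>2))"
    proof -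
      have "\<bar>\<eta>\<bar> \<le> d\<^sup>2/(2*k\<^sup>2)" using e1 unfolding \<eta>0_def by simp
      then show ?thesis by (rule mult_left_mono) simp
    qed
    also have "\<dots> < d\<^sup>2" using k0 d0 by simp
    finally have "r\<^sup>2 < d\<^sup>2" .
    then have "\<bar>r\<bar>\<^sup>2 < d\<^sup>2" by (simp only: power2_abs)
    then have rd: "\<bar>r\<bar> < d" using d0 by (rule power2_less_imp_less[OF _ less_imp_le])
    have quot: "c0/2 < (\<psi> r - \<psi> 0) / r" using dq[OF r0 rd] .
    have A: "s * (\<psi> r - \<psi> 0) > (s * r) * (c0/2)"
    proof -
      have "(s * r) * (c0/2) < (s * r) * ((\<psi> r - \<psi> 0) / r)" by (rule mult_strict_left_mono[OF quot sr'])
      also have "\<dots> = s * (\<psi> r - \<psi> 0)" using r0 by simp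
      finally show ?thesis .
    qed
    have tb: "t \<le> k * c0 / (8 * \<mu>)"
    proof -
      have "\<bar>\<eta>\<bar> \<le> c0\<^sup>2*k\<^sup>2/(64*\<mu>\<^sup>2)" using e1 unfolding \<eta>0_def by simp
      moreover have "(k*c0/(8*\<mu>))\<^sup>2 = c0\<^sup>2*k\<^sup>2/(64*\<mu>\<^sup>2)" using \<mu> by (simp add: power2_eq_square field_simps)
      ultimately have "t\<^sup>2 \<le> (k * c0 / (8 * \<mu>))\<^sup>2" unfolding tt by simp
      moreover have "0 \<le> k*c0/(8*\<mu>)" using k0 c0pos \<mu> by simp
      ultimately show ?thesis by (rule power2_le_imp_le)
    qed
    have B: "(s * r) * (c0/2) \<ge> 4 * s\<^sup>2"
    proof -
      have "4 * \<mu> * t \<le> k * c0 / 2" using tb \<mu> by (simp add: field_simps)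
      then have "(\<mu> * t^3) * (4 * \<mu> * t) \<le> (\<mu> * t^3) * (k * c0 / 2)"
        using \<mu> t0 by (intro mult_left_mono) auto
      moreover have "(s * r) * (c0/2) = (\<mu> * t^3) * (k * c0 / 2)"
      proof -
        have "(s * r) * (c0/2) = (\<bar>s\<bar> * \<bar>r\<bar>) * (c0/2)" using srabs by simp
        also have "\<dots> = (\<mu>*t\<^sup>2)*(k*t)*(c0/2)" by (simp only: sabs rk)
        also have "\<dots> = (\<mu> * t^3) * (k * c0 / 2)" by (simp add: power2_eq_square power3_eq_cube)
        finally show ?thesis .
      qed
      moreover have "4 * s\<^sup>2 = (\<mu> * t^3) * (4 * \<mu> * t)"
      proof -
        have "s\<^sup>2 = \<bar>s\<bar>\<^sup>2" by simp
        also have "\<dots> = (\<mu>*t\<^sup>2)\<^sup>2" by (simp only: sabs)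
        finally have "4 * s\<^sup>2 = 4 * (\<mu>*t\<^sup>2)\<^sup>2" by simp
        also have "\<dots> = (\<mu> * t^3) * (4 * \<mu> * t)" by (simp add: power2_eq_square power3_eq_cube)
        finally show ?thesis .
      qed
      ultimately show ?thesis by linarith
    qed
    have shalf: "\<bar>s\<bar> \<le> 1/2"
    proof -
      have "\<bar>s\<bar> = \<mu> * \<bar>\<eta>\<bar>" unfolding s_def using \<mu> by (simp add: abs_mult)
      also have "\<dots> \<le> \<mu> * (1/(2*\<mu>))" using e1 \<mu> unfolding \<eta>0_def by (intro mult_left_mono) auto
      also have "\<dots> = 1/2" using \<mu> by simp
      finally show ?thesis .
    qed
    define pt where "pt = tilt p g r"
    define Pt where "Pt = pt $ ys0"
    define C where "C = (\<Sum>j\<in>UNIV. p$j * (P - g$j)\<^sup>2)"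
    have C4: "C \<le> 4"
    proof -
      have "C \<le> (\<Sum>j\<in>UNIV. p$j * 4)" unfolding C_def
      proof (rule sum_mono)
        fix j
        have "\<bar>P - g$j\<bar> \<le> 2" using p1[of j] pos[of j] P0 p1[of ys0] unfolding gj P_def by auto
        then have "(P - g$j)\<^sup>2 \<le> 2\<^sup>2" by (metis abs_le_square_iff abs_numeral)
        then show "p$j * (P - g$j)\<^sup>2 \<le> p$j * 4" using pos[of j] by (intro mult_left_mono) auto
      qed
      also have "\<dots> = 4" using sum1 by (simp add: sum_distrib_right[symmetric])
      finally show ?thesis .
    qed
    have L: "(\<Sum>j\<in>UNIV. p$j * exp (s * (P - g$j))) \<le> 1 + s * (P - G) + s\<^sup>2 * C"
    proof -
      have "(\<Sum>j\<in>UNIV. p$j * exp (s * (P - g$j))) \<le> (\<Sum>j\<in>UNIV. p$j * (1 + s * (P - g$j) + (s * (P - g$j))\<^sup>2))"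
      proof (rule sum_mono)
        fix j
        have "\<bar>P - g$j\<bar> \<le> 2" using p1[of j] pos[of j] P0 p1[of ys0] unfolding gj P_def by auto
        then have "\<bar>s * (P - g$j)\<bar> \<le> 1/2 * 2" unfolding abs_mult using shalf
          by (intro mult_mono) auto
        then have "s * (P - g$j) \<le> 1" by simp
        then show "p$j * exp (s * (P - g$j)) \<le> p$j * (1 + s * (P - g$j) + (s * (P - g$j))\<^sup>2)"
          using pos[of j] exp_quad by (intro mult_left_mono) auto
      qed
      also have "\<dots> = (\<Sum>j\<in>UNIV. p$j) + s * (P * (\<Sum>j\<in>UNIV. p$j) - G) + s\<^sup>2 * C"
      proof -
        have "(\<Sum>j\<in>UNIV. p$j * (1 + s * (P - g$j) + (s * (P - g$j))\<^sup>2))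
          = (\<Sum>j\<in>UNIV. p$j + s * (P * p$j - p$j * g$j) + s\<^sup>2 * (p$j * (P - g$j)\<^sup>2))"
          by (intro sum.cong) (simp_all add: power2_eq_square algebra_simps)
        also have "\<dots> = (\<Sum>j\<in>UNIV. p$j) + s * (P * (\<Sum>j\<in>UNIV. p$j) - G) + s\<^sup>2 * C"
          unfolding G_def C_def by (simp add: sum.distrib sum_subtractf sum_distrib_left[symmetric])
        finally show ?thesis .
      qed
      also have "\<dots> = 1 + s * (P - G) + s\<^sup>2 * C" using sum1 by simp
      finally show ?thesis .
    qed
    have Rt: "(\<Sum>j\<in>UNIV. p$j * exp (s * (Pt - (pt$j - onehot y $ j)))) \<ge> 1 + s * (\<psi> r + q)"
    proof -
      have "(\<Sum>j\<in>UNIV. p$j * exp (s * (Pt - (pt$j - onehot y $ j)))) \<ge> (\<Sum>j\<in>UNIV. p$j * (1 + s * (Pt - (pt$j - onehot y $ j))))"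
        using pos by (intro sum_mono mult_left_mono) (auto intro: less_imp_le exp_ge_add_one_self)
      moreover have "(\<Sum>j\<in>UNIV. p$j * (1 + s * (Pt - (pt$j - onehot y $ j)))) = 1 + s * (\<psi> r + q)"
      proof -
        have "(\<Sum>j\<in>UNIV. p$j * (1 + s * (Pt - (pt$j - onehot y $ j))))
          = (\<Sum>j\<in>UNIV. p$j) + s * (Pt * (\<Sum>j\<in>UNIV. p$j) - (\<Sum>j\<in>UNIV. p$j * pt$j) + (\<Sum>j\<in>UNIV. p$j * onehot y $ j))"
          by (simp add: sum.distrib sum_subtractf sum_distrib_left sum_distrib_right algebra_simps)
        also have "(\<Sum>j\<in>UNIV. p$j * onehot y $ j) = q"
        proof -
          have "(\<Sum>j\<in>UNIV. p$j * onehot y $ j) = (\<Sum>j\<in>UNIV. if j = y then p$j else 0)"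
            by (intro sum.cong) (auto simp: onehot_def)
          then show ?thesis by (simp add: q_def)
        qed
        finally show ?thesis using sum1 unfolding \<psi>_def pt_def Pt_def by simp
      qed
      ultimately show ?thesis by simp
    qed
    have psi0: "\<psi> 0 = P - G - q"
    proof -
      have "\<psi> 0 = P - (\<Sum>j\<in>UNIV. (p$j)\<^sup>2)" unfolding \<psi>_def tilt0 P_def by (simp add: power2_eq_square)
      then show ?thesis unfolding S2 Gv by simp
    qed
    have main: "(\<Sum>j\<in>UNIV. p$j * exp (s * (P - g$j))) < (\<Sum>j\<in>UNIV. p$j * exp (s * (Pt - (pt$j - onehot y $ j))))"
    proof -
      have "s\<^sup>2 * C \<le> s\<^sup>2 * 4" using C4 by (intro mult_left_mono) auto
      then show ?thesis using L Rt A B psi0 by (simp add: algebra_simps)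
    qed
    have eys: "onehot y $ ys = 0" using ys by (simp add: onehot_def)
    have Pys: "p$ys = P" using pys P_def by simp
    have gys: "g$ys = P" using ys Pys by (simp add: gj)
    have ptys: "pt$ys = Pt" unfolding pt_def Pt_def tilt_def using Pys gys gys0 P_def by simp
    define N0 where "N0 = (\<Sum>j\<in>UNIV. p$j * exp (- s * g$j))"
    define N1 where "N1 = (\<Sum>j\<in>UNIV. p$j * exp (- s * (pt$j - onehot y $ j)))"
    have N0p: "N0 > 0" unfolding N0_def using pos by (intro sum_pos) auto
    have N1p: "N1 > 0" unfolding N1_def using pos by (intro sum_pos) auto
    have E0: "(\<Sum>j\<in>UNIV. p$j * exp (s * (P - g$j))) = exp (s * P) * N0"
      unfolding N0_def sum_distrib_left by (intro sum.cong) (auto simp: right_diff_distrib exp_diff exp_minus exp_add field_simps)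
    have E1: "(\<Sum>j\<in>UNIV. p$j * exp (s * (Pt - (pt$j - onehot y $ j)))) = exp (s * Pt) * N1"
      unfolding N1_def sum_distrib_left by (intro sum.cong) (auto simp: right_diff_distrib exp_diff exp_minus exp_add field_simps)
    have lt: "exp (s * P) * N0 < exp (s * Pt) * N1" using main E0 E1 by simp
    have "exp (- s * Pt) / N1 = 1 / (exp (s * Pt) * N1)" by (simp add: exp_minus field_simps)
    also have "\<dots> < 1 / (exp (s * P) * N0)"
      using lt N0p N1p by (intro divide_strict_left_mono) auto
    also have "\<dots> = exp (- s * P) / N0" by (simp add: exp_minus field_simps)
    finally have fin: "exp (- s * Pt) / N1 < exp (- s * P) / N0" .
    show "exp (-(\<eta>*\<mu>) * (tilt p (p - onehot y) r $ ys - onehot y $ ys))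
        / (\<Sum>j\<in>UNIV. p$j * exp (-(\<eta>*\<mu>) * (tilt p (p - onehot y) r $ j - onehot y $ j)))
     < exp (-(\<eta>*\<mu>) * (p$ys - onehot y $ ys)) / (\<Sum>j\<in>UNIV. p$j * exp (-(\<eta>*\<mu>) * (p$j - onehot y $ j)))"
      using fin unfolding N0_def N1_def s_def[symmetric] pt_def[symmetric] g_def[symmetric] eys ptys Pys
      by (simp add: g_def)
  qed
qed


lemma GD_mulv: "W_GD \<phi> y \<eta> W *v \<phi> = W *v \<phi> - (\<eta> * (norm \<phi>)\<^sup>2) *\<^sub>R (softmax (W *v \<phi>) - onehot y)"
  unfolding W_GD_def matrix_vector_mult_diff_rdistrib scaleR_matrix_vector_assoc[symmetric] gradF_mulv
  by simp

lemma SAM_mulv: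
  assumes "\<phi> \<noteq> 0"
  shows "W_SAM \<phi> y \<eta> \<rho> W *v \<phi> = W *v \<phi> - (\<eta> * (norm \<phi>)\<^sup>2) *\<^sub>R
     (softmax (W *v \<phi> + rho_tilde \<phi> y \<rho> W *\<^sub>R (softmax (W *v \<phi>) - onehot y)) - onehot y)"
proof -
  let ?g = "softmax (W *v \<phi>) - onehot y"
  define W1 where "W1 = W + (\<rho> / norm (gradF \<phi> y W)) *\<^sub>R gradF \<phi> y W"
  have "W1 *v \<phi> = W *v \<phi> + ((\<rho> / norm (gradF \<phi> y W)) * (norm \<phi>)\<^sup>2) *\<^sub>R ?g"
    unfolding W1_def matrix_vector_mult_add_rdistrib scaleR_matrix_vector_assoc[symmetric] gradF_mulv
    by simp
  also have "(\<rho> / norm (gradF \<phi> y W)) * (norm \<phi>)\<^sup>2 = rho_tilde \<phi> y \<rho> W"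
    unfolding norm_gradF rho_tilde_def using assms by (simp add: power2_eq_square)
  finally have W1: "W1 *v \<phi> = W *v \<phi> + rho_tilde \<phi> y \<rho> W *\<^sub>R ?g" .
  show ?thesis
    unfolding W_SAM_def W1_def[symmetric] matrix_vector_mult_diff_rdistrib scaleR_matrix_vector_assoc[symmetric] gradF_mulv W1
    by simp
qed

lemma conf_formula:
  assumes "W' *v \<phi> = W *v \<phi> + (- s) *\<^sub>R h"
  shows "conf_ratio \<phi> W W' i = exp (- s * h$i) / (\<Sum>j\<in>UNIV. softmax (W *v \<phi>) $ j * exp (- s * h$j))"
proof -
  have "softmax (W' *v \<phi>) $ i = softmax (W *v \<phi>) $ i * exp (- s * h$i) / (\<Sum>j\<in>UNIV. softmax (W *v \<phi>) $ j * exp (- s * h$j))"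
    unfolding assms softmax_shift by simp
  then show ?thesis unfolding conf_ratio_def using softmax_pos[of "W *v \<phi>" i] by simp
qed

lemma softmax_tilt: "softmax (z + r *\<^sub>R (softmax z - onehot y)) = tilt (softmax z) (softmax z - onehot y) r"
  unfolding vec_eq_iff softmax_shift tilt_def by simp

theorem corollary4:
  fixes \<kappa> \<mu> :: real and y :: "'v::finite" and p :: "real ^ 'v"
  assumes "\<kappa> \<ge> 0" and "\<mu> > 0"
  shows "\<exists>\<eta>0 > 0. \<forall>(\<phi> :: real ^ 'd::finite) (W :: real ^ 'd ^ 'v).
           (norm \<phi>)\<^sup>2 = \<mu> \<and> softmax (W *v \<phi>) = p \<longrightarrow>
           (\<forall>\<eta> \<rho> ystar.
              0 < \<bar>\<eta>\<bar> \<and> \<bar>\<eta>\<bar> \<le> 1 \<and> \<bar>\<eta>\<bar> \<le> \<eta>0 \<and>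
              \<bar>\<rho>\<bar> = \<kappa> * sqrt \<bar>\<eta>\<bar> \<and>
              (\<eta> * \<mu>) * rho_tilde \<phi> y \<rho> W \<ge> 0 \<and>
              ystar \<noteq> y \<and> (\<forall>j. j \<noteq> y \<longrightarrow> p $ j \<le> p $ ystar) \<longrightarrow>
                conf_ratio \<phi> W (W_SAM \<phi> y \<eta> \<rho> W) ystar
                  \<le> conf_ratio \<phi> W (W_GD \<phi> y \<eta> W) ystar
              \<and> (0 < p $ ystar \<and> p $ ystar < 1 \<and> rho_tilde \<phi> y \<rho> W \<noteq> 0 \<longrightarrow>
                   conf_ratio \<phi> W (W_SAM \<phi> y \<eta> \<rho> W) ystar
                     < conf_ratio \<phi> W (W_GD \<phi> y \<eta> W) ystar)
              \<and> (rho_tilde \<phi> y \<rho> W = 0 \<longrightarrow>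
                   conf_ratio \<phi> W (W_SAM \<phi> y \<eta> \<rho> W) ystar
                     = conf_ratio \<phi> W (W_GD \<phi> y \<eta> W) ystar))"
proof -
  have eqcase: "conf_ratio \<phi> W (W_SAM \<phi> y \<eta> \<rho> W) i = conf_ratio \<phi> W (W_GD \<phi> y \<eta> W) i"
    if "rho_tilde \<phi> y \<rho> W = 0" "(norm \<phi>)\<^sup>2 = \<mu>" for \<phi> :: "real^'d" and W :: "real^'d^'v" and \<eta> \<rho> i
  proof -
    have "\<phi> \<noteq> 0" using that(2) assms(2) by auto
    then have "W_SAM \<phi> y \<eta> \<rho> W *v \<phi> = W_GD \<phi> y \<eta> W *v \<phi>"
      by (simp add: SAM_mulv GD_mulv that(1))
    then show ?thesis unfolding conf_ratio_def by simp
  qed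
  have generic: "\<exists>\<eta>0 > 0. \<forall>(\<phi> :: real ^ 'd) (W :: real ^ 'd ^ 'v).
           (norm \<phi>)\<^sup>2 = \<mu> \<and> softmax (W *v \<phi>) = p \<longrightarrow>
           (\<forall>\<eta> \<rho> ystar.
              0 < \<bar>\<eta>\<bar> \<and> \<bar>\<eta>\<bar> \<le> \<eta>0 \<and>
              \<bar>\<rho>\<bar> = \<kappa> * sqrt \<bar>\<eta>\<bar> \<and>
              (\<eta> * \<mu>) * rho_tilde \<phi> y \<rho> W \<ge> 0 \<and>
              ystar \<noteq> y \<and> (\<forall>j. j \<noteq> y \<longrightarrow> p $ j \<le> p $ ystar) \<and> rho_tilde \<phi> y \<rho> W \<noteq> 0 \<longrightarrow>
                conf_ratio \<phi> W (W_SAM \<phi> y \<eta> \<rho> W) ystar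
                     < conf_ratio \<phi> W (W_GD \<phi> y \<eta> W) ystar)"
  proof (cases "\<kappa> > 0 \<and> (\<exists>(\<phi>0 :: real ^ 'd) (W0 :: real ^ 'd ^ 'v) ys0. (norm \<phi>0)\<^sup>2 = \<mu> \<and> softmax (W0 *v \<phi>0) = p
                    \<and> ys0 \<noteq> y \<and> (\<forall>j. j \<noteq> y \<longrightarrow> p $ j \<le> p $ ys0))")
    case False
    show ?thesis
    proof (rule exI[of _ "1::real"], intro conjI allI impI)
      show "(0::real) < 1" by simp
    next
      fix \<phi> :: "real^'d" and W :: "real^'d^'v" and \<eta> \<rho> ystar
      assume H1: "(norm \<phi>)\<^sup>2 = \<mu> \<and> softmax (W *v \<phi>) = p"
        and H2: "0 < \<bar>\<eta>\<bar> \<and> \<bar>\<eta>\<bar> \<le> 1 \<and>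
              \<bar>\<rho>\<bar> = \<kappa> * sqrt \<bar>\<eta>\<bar> \<and>
              (\<eta> * \<mu>) * rho_tilde \<phi> y \<rho> W \<ge> 0 \<and>
              ystar \<noteq> y \<and> (\<forall>j. j \<noteq> y \<longrightarrow> p $ j \<le> p $ ystar) \<and> rho_tilde \<phi> y \<rho> W \<noteq> 0"
      have h: "(norm \<phi>)\<^sup>2 = \<mu>" "softmax (W *v \<phi>) = p" "\<bar>\<rho>\<bar> = \<kappa> * sqrt \<bar>\<eta>\<bar>"
        "ystar \<noteq> y" "\<forall>j. j \<noteq> y \<longrightarrow> p $ j \<le> p $ ystar" "rho_tilde \<phi> y \<rho> W \<noteq> 0"
        using H1 H2 by blast+
      have "\<kappa> > 0"
      proof (rule ccontr)
        assume "\<not> \<kappa> > 0"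
        then have "\<kappa> = 0" using assms(1) by simp
        then have "\<rho> = 0" using h(3) by simp
        then show False using h(6) unfolding rho_tilde_def by simp
      qed
      then show "conf_ratio \<phi> W (W_SAM \<phi> y \<eta> \<rho> W) ystar < conf_ratio \<phi> W (W_GD \<phi> y \<eta> W) ystar"
        using False h by blast
    qed
  next
    case True
    then obtain \<phi>0 :: "real^'d" and W0 :: "real^'d^'v" and ys0 where
      k0: "\<kappa> > 0" and h0: "(norm \<phi>0)\<^sup>2 = \<mu>" "softmax (W0 *v \<phi>0) = p" "ys0 \<noteq> y"
        "\<forall>j. j \<noteq> y \<longrightarrow> p $ j \<le> p $ ys0" by blast
    have pos: "\<And>i. p$i > 0" using h0(2) softmax_pos by metis
    have sum1: "(\<Sum>i\<in>UNIV. p$i) = 1" using h0(2) softmax_sum by metis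
    have mx: "\<And>j. j \<noteq> y \<Longrightarrow> p$j \<le> p$ys0" using h0(4) by blast
    obtain \<eta>0 where e0: "\<eta>0 > 0" and E: "\<forall>\<eta> r ys. 0 < \<bar>\<eta>\<bar> \<and> \<bar>\<eta>\<bar> \<le> \<eta>0 \<and>
      \<bar>r\<bar> = \<kappa> * sqrt \<bar>\<eta>\<bar> * sqrt \<mu> / norm (p - onehot y) \<and> \<eta>*\<mu>*r > 0 \<and> ys \<noteq> y \<and> p$ys = p$ys0 \<longrightarrow>
     exp (-(\<eta>*\<mu>) * (tilt p (p - onehot y) r $ ys - onehot y $ ys))
        / (\<Sum>j\<in>UNIV. p$j * exp (-(\<eta>*\<mu>) * (tilt p (p - onehot y) r $ j - onehot y $ j)))
     < exp (-(\<eta>*\<mu>) * (p$ys - onehot y $ ys)) / (\<Sum>j\<in>UNIV. p$j * exp (-(\<eta>*\<mu>) * (p$j - onehot y $ j)))"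
      using core[OF pos sum1 h0(3) mx k0 assms(2)] by blast
    show ?thesis
    proof (intro exI[of _ \<eta>0] conjI e0 allI impI)
      fix \<phi> :: "real^'d" and W :: "real^'d^'v" and \<eta> \<rho> ystar
      assume h: "(norm \<phi>)\<^sup>2 = \<mu> \<and> softmax (W *v \<phi>) = p"
        and H2: "0 < \<bar>\<eta>\<bar> \<and> \<bar>\<eta>\<bar> \<le> \<eta>0 \<and>
              \<bar>\<rho>\<bar> = \<kappa> * sqrt \<bar>\<eta>\<bar> \<and>
              (\<eta> * \<mu>) * rho_tilde \<phi> y \<rho> W \<ge> 0 \<and>
              ystar \<noteq> y \<and> (\<forall>j. j \<noteq> y \<longrightarrow> p $ j \<le> p $ ystar) \<and> rho_tilde \<phi> y \<rho> W \<noteq> 0"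
      have h2: "0 < \<bar>\<eta>\<bar>" "\<bar>\<eta>\<bar> \<le> \<eta>0" "\<bar>\<rho>\<bar> = \<kappa> * sqrt \<bar>\<eta>\<bar>"
        "0 \<le> (\<eta> * \<mu>) * rho_tilde \<phi> y \<rho> W"
        "ystar \<noteq> y" "\<forall>j. j \<noteq> y \<longrightarrow> p $ j \<le> p $ ystar" "rho_tilde \<phi> y \<rho> W \<noteq> 0"
        using H2 by blast+
      define r where "r = rho_tilde \<phi> y \<rho> W"
      have nphi: "norm \<phi> = sqrt \<mu>" using h by (metis norm_ge_zero real_sqrt_unique)
      have phi0: "\<phi> \<noteq> 0" using h assms(2) by auto
      have pys: "p$ystar = p$ys0" using h2(5,6) h0(3,4) by (meson antisym)
      have rabs: "\<bar>r\<bar> = \<kappa> * sqrt \<bar>\<eta>\<bar> * sqrt \<mu> / norm (p - onehot y)"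
        unfolding r_def rho_tilde_def using h nphi h2(3) by (simp add: abs_mult)
      have sr: "\<eta>*\<mu>*r > 0"
      proof -
        have "\<eta>*\<mu>*r \<noteq> 0" using h2(1,7) assms(2) unfolding r_def by simp
        then show ?thesis using h2(4) unfolding r_def by linarith
      qed
      have ineq: "exp (-(\<eta>*\<mu>) * (tilt p (p - onehot y) r $ ystar - onehot y $ ystar))
        / (\<Sum>j\<in>UNIV. p$j * exp (-(\<eta>*\<mu>) * (tilt p (p - onehot y) r $ j - onehot y $ j)))
     < exp (-(\<eta>*\<mu>) * (p$ystar - onehot y $ ystar)) / (\<Sum>j\<in>UNIV. p$j * exp (-(\<eta>*\<mu>) * (p$j - onehot y $ j)))"
        using E h2(1,2,5) rabs sr pys by blast
      have S: "W_SAM \<phi> y \<eta> \<rho> W *v \<phi> = W *v \<phi> + (- (\<eta>*\<mu>)) *\<^sub>R (tilt p (p - onehot y) r - onehot y)"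
        unfolding SAM_mulv[OF phi0] softmax_tilt r_def using h by simp
      have G: "W_GD \<phi> y \<eta> W *v \<phi> = W *v \<phi> + (- (\<eta>*\<mu>)) *\<^sub>R (p - onehot y)"
        unfolding GD_mulv using h by simp
      show "conf_ratio \<phi> W (W_SAM \<phi> y \<eta> \<rho> W) ystar < conf_ratio \<phi> W (W_GD \<phi> y \<eta> W) ystar"
        unfolding conf_formula[OF S] conf_formula[OF G] using ineq h by simp
    qed
  qed
  then obtain \<eta>0 where e0: "\<eta>0 > 0" and G0: "\<forall>(\<phi> :: real ^ 'd) (W :: real ^ 'd ^ 'v).
           (norm \<phi>)\<^sup>2 = \<mu> \<and> softmax (W *v \<phi>) = p \<longrightarrow>
           (\<forall>\<eta> \<rho> ystar.
              0 < \<bar>\<eta>\<bar> \<and> \<bar>\<eta>\<bar> \<le> \<eta>0 \<and>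
              \<bar>\<rho>\<bar> = \<kappa> * sqrt \<bar>\<eta>\<bar> \<and>
              (\<eta> * \<mu>) * rho_tilde \<phi> y \<rho> W \<ge> 0 \<and>
              ystar \<noteq> y \<and> (\<forall>j. j \<noteq> y \<longrightarrow> p $ j \<le> p $ ystar) \<and> rho_tilde \<phi> y \<rho> W \<noteq> 0 \<longrightarrow>
                conf_ratio \<phi> W (W_SAM \<phi> y \<eta> \<rho> W) ystar
                     < conf_ratio \<phi> W (W_GD \<phi> y \<eta> W) ystar)" by blast
  show ?thesis
  proof (intro exI[of _ \<eta>0] conjI e0 allI impI)
    fix \<phi> :: "real^'d" and W :: "real^'d^'v" and \<eta> \<rho> ystar
    assume H1: "(norm \<phi>)\<^sup>2 = \<mu> \<and> softmax (W *v \<phi>) = p"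
      and H2: "0 < \<bar>\<eta>\<bar> \<and> \<bar>\<eta>\<bar> \<le> 1 \<and> \<bar>\<eta>\<bar> \<le> \<eta>0 \<and>
              \<bar>\<rho>\<bar> = \<kappa> * sqrt \<bar>\<eta>\<bar> \<and>
              (\<eta> * \<mu>) * rho_tilde \<phi> y \<rho> W \<ge> 0 \<and>
              ystar \<noteq> y \<and> (\<forall>j. j \<noteq> y \<longrightarrow> p $ j \<le> p $ ystar)"
    have h: "(norm \<phi>)\<^sup>2 = \<mu>" "softmax (W *v \<phi>) = p" using H1 by blast+
    have h2: "0 < \<bar>\<eta>\<bar>" "\<bar>\<eta>\<bar> \<le> 1" "\<bar>\<eta>\<bar> \<le> \<eta>0" "\<bar>\<rho>\<bar> = \<kappa> * sqrt \<bar>\<eta>\<bar>"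
        "0 \<le> (\<eta> * \<mu>) * rho_tilde \<phi> y \<rho> W"
        "ystar \<noteq> y" "\<forall>j. j \<noteq> y \<longrightarrow> p $ j \<le> p $ ystar" using H2 by blast+
    have st: "rho_tilde \<phi> y \<rho> W \<noteq> 0 \<Longrightarrow> conf_ratio \<phi> W (W_SAM \<phi> y \<eta> \<rho> W) ystar
                     < conf_ratio \<phi> W (W_GD \<phi> y \<eta> W) ystar"
      using G0 h h2 by blast
    have eq: "rho_tilde \<phi> y \<rho> W = 0 \<Longrightarrow> conf_ratio \<phi> W (W_SAM \<phi> y \<eta> \<rho> W) ystar
                     = conf_ratio \<phi> W (W_GD \<phi> y \<eta> W) ystar"
      using eqcase h(1) by blast
    show "conf_ratio \<phi> W (W_SAM \<phi> y \<eta> \<rho> W) ystar \<le> conf_ratio \<phi> W (W_GD \<phi> y \<eta> W) ystar"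
      using st eq by fastforce
    show "conf_ratio \<phi> W (W_SAM \<phi> y \<eta> \<rho> W) ystar < conf_ratio \<phi> W (W_GD \<phi> y \<eta> W) ystar"
      if "0 < p $ ystar \<and> p $ ystar < 1 \<and> rho_tilde \<phi> y \<rho> W \<noteq> 0"
      using st that by blast
    show "conf_ratio \<phi> W (W_SAM \<phi> y \<eta> \<rho> W) ystar = conf_ratio \<phi> W (W_GD \<phi> y \<eta> W) ystar"
      if "rho_tilde \<phi> y \<rho> W = 0"
      using eq that by blast
  qed
qed

end
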